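(* Let $\mathcal{D}=\mathcal{P}_{\mathcal{D}}\cup\mathcal{L}_{\mathcal{D}}$ be a dominating set of the incidence graph of an arbitrary projective plane $\Pi_q$ of order $q$. Then $|\mathcal{D}|\geq q^2+q-(q-1)|\mathcal{P}_{\mathcal{D}}|$ and $|\mathcal{D}|\geq q^2+q-(q-1)|\mathcal{L}_{\mathcal{D}}|$. In particular, if $|\mathcal{D}|<3q-1$, then $|\mathcal{P}_{\mathcal{D}}|\geq q$ and $|\mathcal{L}_{\mathcal{D}}|\geq q$. *)

theory Defs
  imports Main
begin

definition projective_plane :: "'p set \<Rightarrow> 'l set \<Rightarrow> ('p \<Rightarrow> 'l \<Rightarrow> bool) \<Rightarrow> bool" where
  "projective_plane P L I \<longleftrightarrow>
     finite P \<and> finite L \<and>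
     (\<forall>x\<in>P. \<forall>y\<in>P. x \<noteq> y \<longrightarrow> (\<exists>!l. l \<in> L \<and> I x l \<and> I y l)) \<and>
     (\<forall>l\<in>L. \<forall>m\<in>L. l \<noteq> m \<longrightarrow> (\<exists>!x. x \<in> P \<and> I x l \<and> I x m)) \<and>
     (\<exists>S. S \<subseteq> P \<and> card S = 4 \<and> (\<forall>l\<in>L. card {x\<in>S. I x l} \<le> 2))"

definition projective_plane_of_order :: "'p set \<Rightarrow> 'l set \<Rightarrow> ('p \<Rightarrow> 'l \<Rightarrow> bool) \<Rightarrow> nat \<Rightarrow> bool" where
  "projective_plane_of_order P L I q \<longleftrightarrow>
     projective_plane P L I \<and> (\<forall>l\<in>L. card {x\<in>P. I x l} = q + 1)"

definition incidence_dominating :: "'p set \<Rightarrow> 'l set \<Rightarrow> ('p \<Rightarrow> 'l \<Rightarrow> bool) \<Rightarrow> 'p set \<Rightarrow> 'l set \<Rightarrow> bool" where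
  "incidence_dominating P L I PD LD \<longleftrightarrow>
     PD \<subseteq> P \<and> LD \<subseteq> L \<and>
     (\<forall>x\<in>P - PD. \<exists>l\<in>LD. I x l) \<and>
     (\<forall>l\<in>L - LD. \<exists>x\<in>PD. I x l)"

end

theory Submission
  imports Defs
begin

locale ppo =
  fixes P :: "'p set" and L :: "'l set" and I :: "'p \<Rightarrow> 'l \<Rightarrow> bool" and q :: nat
  assumes finP: "finite P" and finL: "finite L"
    and lineu: "\<And>x y. x\<in>P \<Longrightarrow> y\<in>P \<Longrightarrow> x \<noteq> y \<Longrightarrow> \<exists>!l. l \<in> L \<and> I x l \<and> I y l"
    and pointu: "\<And>l m. l\<in>L \<Longrightarrow> m\<in>L \<Longrightarrow> l \<noteq> m \<Longrightarrow> \<exists>!x. x \<in> P \<and> I x l \<and> I x m"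
    and nondeg: "\<exists>S. S \<subseteq> P \<and> card S = 4 \<and> (\<forall>l\<in>L. card {x\<in>S. I x l} \<le> 2)"
    and cardl: "\<And>l. l\<in>L \<Longrightarrow> card {x\<in>P. I x l} = q + 1"
begin

definition pts where "pts l = {x\<in>P. I x l}"
definition lns where "lns x = {l\<in>L. I x l}"

definition join where "join x y = (THE l. l \<in> L \<and> I x l \<and> I y l)"
definition meet where "meet l m = (THE x. x \<in> P \<and> I x l \<and> I x m)"

lemma join_props:
  assumes "x\<in>P" "y\<in>P" "x\<noteq>y"
  shows "join x y \<in> L \<and> I x (join x y) \<and> I y (join x y)"
  unfolding join_def using theI'[OF lineu[OF assms]] .

lemma join_unique:
  assumes "x\<in>P" "y\<in>P" "x\<noteq>y" "l\<in>L" "I x l" "I y l"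
  shows "join x y = l"
  unfolding join_def by (rule the1_equality[OF lineu[OF assms(1-3)]]) (use assms in auto)

lemma meet_props:
  assumes "l\<in>L" "m\<in>L" "l\<noteq>m"
  shows "meet l m \<in> P \<and> I (meet l m) l \<and> I (meet l m) m"
  unfolding meet_def using theI'[OF pointu[OF assms]] .

lemma meet_unique:
  assumes "l\<in>L" "m\<in>L" "l\<noteq>m" "x\<in>P" "I x l" "I x m"
  shows "meet l m = x"
  unfolding meet_def by (rule the1_equality[OF pointu[OF assms(1-3)]]) (use assms in auto)

lemma line_not_through:
  assumes "x \<in> P" shows "\<exists>l\<in>L. \<not> I x l"
proof (rule ccontr)
  assume H: "\<not> (\<exists>l\<in>L. \<not> I x l)"
  obtain S where S: "S \<subseteq> P" "card S = 4" "\<forall>l\<in>L. card {x\<in>S. I x l} \<le> 2"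
    using nondeg by blast
  have fS: "finite S" using S(2) card.infinite by fastforce
  have c3: "Suc (Suc (Suc 0)) \<le> card (S - {x})" using S(2) fS card_Diff_singleton_if[of S x] by auto
  obtain T where T: "T \<subseteq> S - {x}" "card T = 3"
    using obtain_subset_with_card_n[OF c3] by (metis numeral_3_eq_3)
  obtain a b c where T3: "T = {a,b,c}" "a \<noteq> b" "b \<noteq> c" "a \<noteq> c"
    using T(2) unfolding card_3_iff by blast
  have abc: "a \<in> S - {x}" "b \<in> S - {x}" "c \<in> S - {x}" "a\<noteq>b" "a\<noteq>c" "b\<noteq>c"
    using T(1) T3 by auto
  have aP: "a\<in>P" "b\<in>P" "c\<in>P" "x\<in>P" using abc S(1) assms by auto
  define l1 where "l1 = join a b"
  define l2 where "l2 = join a c"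
  have l1: "l1 \<in> L" "I a l1" "I b l1" using join_props[of a b] aP abc l1_def by auto
  have l2: "l2 \<in> L" "I a l2" "I c l2" using join_props[of a c] aP abc l2_def by auto
  have "I x l1" "I x l2" using H l1 l2 by auto
  have "l1 = join x a" using join_unique[of x a l1] aP abc l1 \<open>I x l1\<close> by auto
  moreover have "l2 = join x a" using join_unique[of x a l2] aP abc l2 \<open>I x l2\<close> by auto
  ultimately have "l1 = l2" by simp
  hence "{a,b,c} \<subseteq> {y\<in>S. I y l1}" using l1 l2 abc by auto
  hence "card {a,b,c} \<le> card {y\<in>S. I y l1}" using fS by (intro card_mono) auto
  moreover have "card {a,b,c} = 3" using abc by auto
  ultimately show False using S(3) l1(1) by fastforce
qed

lemma card_pts: "l \<in> L \<Longrightarrow> card (pts l) = q + 1"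
  using cardl pts_def by simp

lemma card_lns_aux:
  assumes x: "x\<in>P" and l: "l\<in>L" "\<not> I x l"
  shows "card (lns x) = card (pts l)"
proof -
  have "bij_betw (\<lambda>m. meet m l) (lns x) (pts l)"
  proof (rule bij_betwI')
    fix m1 m2 assume m: "m1 \<in> lns x" "m2 \<in> lns x"
    have ne: "m1 \<noteq> l" "m2 \<noteq> l" using m l unfolding lns_def by auto
    show "(meet m1 l = meet m2 l) = (m1 = m2)"
    proof
      assume e: "meet m1 l = meet m2 l"
      let ?y = "meet m1 l"
      have y1: "?y \<in> P" "I ?y m1" "I ?y l" using meet_props[of m1 l] m ne l unfolding lns_def by auto
      have y2: "I ?y m2" using meet_props[of m2 l] m ne l e unfolding lns_def by auto
      have yx: "?y \<noteq> x" using y1 l by auto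
      have "m1 = join x ?y" using join_unique[of x ?y m1] x y1 yx m unfolding lns_def by auto
      moreover have "m2 = join x ?y" using join_unique[of x ?y m2] x y1 y2 yx m unfolding lns_def by auto
      ultimately show "m1 = m2" by simp
    qed simp
  next
    fix m assume m: "m \<in> lns x"
    have "m \<noteq> l" using m l unfolding lns_def by auto
    thus "meet m l \<in> pts l" using meet_props[of m l] m l unfolding lns_def pts_def by auto
  next
    fix y assume y: "y \<in> pts l"
    have yx: "y \<noteq> x" using y l unfolding pts_def by auto
    define m where "m = join x y"
    have mm: "m \<in> L" "I x m" "I y m" using join_props[of x y] x y yx m_def unfolding pts_def by auto
    have "m \<noteq> l" using mm l by auto
    hence "meet m l = y" using meet_unique[of m l y] mm l y unfolding pts_def by auto
    thus "\<exists>m\<in>lns x. y = meet m l" using mm unfolding lns_def by auto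
  qed
  thus ?thesis by (rule bij_betw_same_card)
qed

lemma card_lns: "x \<in> P \<Longrightarrow> card (lns x) = q + 1"
  using line_not_through card_lns_aux card_pts by metis

lemma finite_lns: "finite (lns x)" using finL unfolding lns_def by simp
lemma finite_pts: "finite (pts l)" using finP unfolding pts_def by simp

lemma P_nonempty: "\<exists>x. x \<in> P"
proof -
  obtain S where S: "S \<subseteq> P" "card S = 4" using nondeg by blast
  hence "S \<noteq> {}" by auto
  thus ?thesis using S by auto
qed

lemma card_P: "card P \<ge> q*q + q + 1"
proof -
  obtain x0 where x0: "x0 \<in> P" using P_nonempty by blast
  let ?F = "\<lambda>m. pts m - {x0}"
  have sub: "insert x0 (\<Union>m\<in>lns x0. ?F m) \<subseteq> P" using x0 unfolding pts_def lns_def by auto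
  have disj: "\<forall>m1\<in>lns x0. \<forall>m2\<in>lns x0. m1 \<noteq> m2 \<longrightarrow> ?F m1 \<inter> ?F m2 = {}"
  proof (intro ballI impI)
    fix m1 m2 assume m: "m1 \<in> lns x0" "m2 \<in> lns x0" "m1 \<noteq> m2"
    show "?F m1 \<inter> ?F m2 = {}"
    proof (rule ccontr)
      assume "?F m1 \<inter> ?F m2 \<noteq> {}"
      then obtain y where y: "y \<in> P" "I y m1" "I y m2" "y \<noteq> x0" unfolding pts_def by auto
      have "m1 = join x0 y" "m2 = join x0 y" using join_unique[of x0 y] x0 y m unfolding lns_def by auto
      thus False using m by simp
    qed
  qed
  have cF: "\<And>m. m \<in> lns x0 \<Longrightarrow> card (?F m) = q"
    using card_pts x0 unfolding lns_def pts_def by auto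
  have "card (\<Union>m\<in>lns x0. ?F m) = (\<Sum>m\<in>lns x0. card (?F m))"
    using disj finite_lns finite_pts by (intro card_UN_disjoint) auto
  also have "\<dots> = (q+1)*q" using cF card_lns[OF x0] by simp
  finally have c: "card (\<Union>m\<in>lns x0. ?F m) = (q+1)*q" .
  have "x0 \<notin> (\<Union>m\<in>lns x0. ?F m)" by auto
  moreover have "finite (\<Union>m\<in>lns x0. ?F m)" using finite_lns finite_pts by auto
  ultimately have "card (insert x0 (\<Union>m\<in>lns x0. ?F m)) = (q+1)*q + 1"
    using c card_insert_disjoint by (metis Suc_eq_plus1)
  moreover have "card (insert x0 (\<Union>m\<in>lns x0. ?F m)) \<le> card P" using sub finP by (rule card_mono[rotated])
  ultimately show ?thesis by (simp add: algebra_simps)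
qed

lemma card_L: "card L \<ge> q*q + q + 1"
proof -
  obtain x where x: "x \<in> P" using P_nonempty by blast
  obtain l0 where l0: "l0 \<in> L" using line_not_through[OF x] by blast
  let ?F = "\<lambda>y. lns y - {l0}"
  have sub: "insert l0 (\<Union>y\<in>pts l0. ?F y) \<subseteq> L" using l0 unfolding pts_def lns_def by auto
  have disj: "\<forall>m1\<in>pts l0. \<forall>m2\<in>pts l0. m1 \<noteq> m2 \<longrightarrow> ?F m1 \<inter> ?F m2 = {}"
  proof (intro ballI impI)
    fix m1 m2 assume m: "m1 \<in> pts l0" "m2 \<in> pts l0" "m1 \<noteq> m2"
    show "?F m1 \<inter> ?F m2 = {}"
    proof (rule ccontr)
      assume "?F m1 \<inter> ?F m2 \<noteq> {}"
      then obtain y where y: "y \<in> L" "I m1 y" "I m2 y" "y \<noteq> l0" unfolding lns_def by auto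
      have "m1 = meet l0 y" "m2 = meet l0 y" using meet_unique[of l0 y] l0 y m unfolding pts_def by auto
      thus False using m by simp
    qed
  qed
  have cF: "\<And>m. m \<in> pts l0 \<Longrightarrow> card (?F m) = q"
    using card_lns l0 unfolding lns_def pts_def by auto
  have "card (\<Union>m\<in>pts l0. ?F m) = (\<Sum>m\<in>pts l0. card (?F m))"
    using disj finite_lns finite_pts by (intro card_UN_disjoint) auto
  also have "\<dots> = (q+1)*q" using cF card_pts[OF l0] by simp
  finally have c: "card (\<Union>m\<in>pts l0. ?F m) = (q+1)*q" .
  have "l0 \<notin> (\<Union>m\<in>pts l0. ?F m)" by auto
  moreover have "finite (\<Union>m\<in>pts l0. ?F m)" using finite_lns finite_pts by auto
  ultimately have "card (insert l0 (\<Union>m\<in>pts l0. ?F m)) = (q+1)*q + 1"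
    using c card_insert_disjoint by (metis Suc_eq_plus1)
  moreover have "card (insert l0 (\<Union>m\<in>pts l0. ?F m)) \<le> card L" using sub finL by (rule card_mono[rotated])
  ultimately show ?thesis by (simp add: algebra_simps)
qed

lemma cover_lines:
  assumes K: "finite K" "K \<subseteq> P" "K \<noteq> {}"
  shows "card (\<Union>x\<in>K. lns x) \<le> q * card K + 1"
proof -
  obtain x0 where x0: "x0 \<in> K" using K by blast
  have eq: "(\<Union>x\<in>K. lns x) = lns x0 \<union> (\<Union>x\<in>K-{x0}. lns x - lns x0)" using x0 by auto
  have b: "\<And>x. x \<in> K - {x0} \<Longrightarrow> card (lns x - lns x0) \<le> q"
  proof -
    fix x assume x: "x \<in> K - {x0}"
    have xP: "x \<in> P" "x0 \<in> P" "x \<noteq> x0" using x x0 K by auto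
    have j: "join x x0 \<in> lns x" "join x x0 \<in> lns x0" using join_props[OF xP] unfolding lns_def by auto
    have "lns x - lns x0 \<subseteq> lns x - {join x x0}" using j by auto
    hence "card (lns x - lns x0) \<le> card (lns x - {join x x0})" using finite_lns by (intro card_mono) auto
    also have "\<dots> = q" using card_lns[OF xP(1)] j finite_lns by simp
    finally show "card (lns x - lns x0) \<le> q" .
  qed
  have "card (\<Union>x\<in>K. lns x) \<le> card (lns x0) + card (\<Union>x\<in>K-{x0}. lns x - lns x0)"
    unfolding eq by (rule card_Un_le)
  also have "card (\<Union>x\<in>K-{x0}. lns x - lns x0) \<le> (\<Sum>x\<in>K-{x0}. card (lns x - lns x0))"
    by (rule card_UN_le) (use K in auto)
  also have "\<dots> \<le> (\<Sum>x\<in>K-{x0}. q)" by (rule sum_mono) (rule b)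
  also have "\<dots> = q * (card K - 1)" using K x0 by simp
  finally have "card (\<Union>x\<in>K. lns x) \<le> q + 1 + q * (card K - 1)" using card_lns x0 K by auto
  moreover have "card K \<ge> 1" using K by (simp add: Suc_leI card_gt_0_iff)
  ultimately show ?thesis by (simp add: algebra_simps right_diff_distrib')
qed

lemma cover_points:
  assumes K: "finite K" "K \<subseteq> L" "K \<noteq> {}"
  shows "card (\<Union>x\<in>K. pts x) \<le> q * card K + 1"
proof -
  obtain x0 where x0: "x0 \<in> K" using K by blast
  have eq: "(\<Union>x\<in>K. pts x) = pts x0 \<union> (\<Union>x\<in>K-{x0}. pts x - pts x0)" using x0 by auto
  have b: "\<And>x. x \<in> K - {x0} \<Longrightarrow> card (pts x - pts x0) \<le> q"
  proof -
    fix x assume x: "x \<in> K - {x0}"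
    have xP: "x \<in> L" "x0 \<in> L" "x \<noteq> x0" using x x0 K by auto
    have j: "meet x x0 \<in> pts x" "meet x x0 \<in> pts x0" using meet_props[OF xP] unfolding pts_def by auto
    have "pts x - pts x0 \<subseteq> pts x - {meet x x0}" using j by auto
    hence "card (pts x - pts x0) \<le> card (pts x - {meet x x0})" using finite_pts by (intro card_mono) auto
    also have "\<dots> = q" using card_pts[OF xP(1)] j finite_pts by simp
    finally show "card (pts x - pts x0) \<le> q" .
  qed
  have "card (\<Union>x\<in>K. pts x) \<le> card (pts x0) + card (\<Union>x\<in>K-{x0}. pts x - pts x0)"
    unfolding eq by (rule card_Un_le)
  also have "card (\<Union>x\<in>K-{x0}. pts x - pts x0) \<le> (\<Sum>x\<in>K-{x0}. card (pts x - pts x0))"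
    by (rule card_UN_le) (use K in auto)
  also have "\<dots> \<le> (\<Sum>x\<in>K-{x0}. q)" by (rule sum_mono) (rule b)
  also have "\<dots> = q * (card K - 1)" using K x0 by simp
  finally have "card (\<Union>x\<in>K. pts x) \<le> q + 1 + q * (card K - 1)" using card_pts x0 K by auto
  moreover have "card K \<ge> 1" using K by (simp add: Suc_leI card_gt_0_iff)
  ultimately show ?thesis by (simp add: algebra_simps right_diff_distrib')
qed

lemma bound1:
  assumes "PD \<subseteq> P" "LD \<subseteq> L" "\<forall>l\<in>L - LD. \<exists>x\<in>PD. I x l"
  shows "card PD + card LD + (q - 1) * card PD \<ge> q*q + q"
proof (cases "PD = {}")
  case True
  hence "LD = L" using assms by auto
  thus ?thesis using card_L True by simp
next
  case False
  have fPD: "finite PD" using assms finP finite_subset by blast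
  have fLD: "finite LD" using assms finL finite_subset by blast
  have "L - LD \<subseteq> (\<Union>x\<in>PD. lns x)" using assms unfolding lns_def by auto
  hence "card (L - LD) \<le> q * card PD + 1"
    using cover_lines[OF fPD assms(1) False] finite_lns fPD
    by (meson card_mono finite_UN_I le_trans)
  moreover have "card (L - LD) = card L - card LD" using assms fLD by (simp add: card_Diff_subset)
  moreover have "card LD \<le> card L" using assms finL card_mono by blast
  ultimately have "card L \<le> card LD + q * card PD + 1" by linarith
  hence "q*q + q \<le> card LD + q * card PD" using card_L by linarith
  moreover have "card PD + (q - 1) * card PD = q * card PD" if "q \<ge> 1" using that
    by (cases q) auto
  ultimately show ?thesis
    by (cases "q = 0") auto
qed

lemma bound2:
  assumes "PD \<subseteq> P" "LD \<subseteq> L" "\<forall>x\<in>P - PD. \<exists>l\<in>LD. I x l"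
  shows "card PD + card LD + (q - 1) * card LD \<ge> q*q + q"
proof (cases "LD = {}")
  case True
  hence "PD = P" using assms by auto
  thus ?thesis using card_P True by simp
next
  case False
  have fPD: "finite PD" using assms finP finite_subset by blast
  have fLD: "finite LD" using assms finL finite_subset by blast
  have "P - PD \<subseteq> (\<Union>x\<in>LD. pts x)" using assms unfolding pts_def by auto
  hence "card (P - PD) \<le> q * card LD + 1"
    using cover_points[OF fLD assms(2) False] finite_pts fLD
    by (meson card_mono finite_UN_I le_trans)
  moreover have "card (P - PD) = card P - card PD" using assms fPD by (simp add: card_Diff_subset)
  moreover have "card PD \<le> card P" using assms finP card_mono by blast
  ultimately have "card P \<le> card PD + q * card LD + 1" by linarith
  hence "q*q + q \<le> card PD + q * card LD" using card_P by linarith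
  moreover have "card LD + (q - 1) * card LD = q * card LD" if "q \<ge> 1" using that
    by (cases q) auto
  ultimately show ?thesis
    by (cases "q = 0") auto
qed

end

theorem proposition2:
  fixes P :: "'p set" and L :: "'l set" and I :: "'p \<Rightarrow> 'l \<Rightarrow> bool"
    and q :: nat and PD :: "'p set" and LD :: "'l set"
  assumes "projective_plane_of_order P L I q"
    and "incidence_dominating P L I PD LD"
  shows "int (card PD + card LD) \<ge> int q ^ 2 + int q - (int q - 1) * int (card PD) \<and>
         int (card PD + card LD) \<ge> int q ^ 2 + int q - (int q - 1) * int (card LD) \<and>
         (int (card PD + card LD) < 3 * int q - 1 \<longrightarrow> card PD \<ge> q \<and> card LD \<ge> q)"
proof -
  have H: "(finite P \<and> finite L \<and>
     (\<forall>x\<in>P. \<forall>y\<in>P. x \<noteq> y \<longrightarrow> (\<exists>!l. l \<in> L \<and> I x l \<and> I y l)) \<and>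
     (\<forall>l\<in>L. \<forall>m\<in>L. l \<noteq> m \<longrightarrow> (\<exists>!x. x \<in> P \<and> I x l \<and> I x m)) \<and>
     (\<exists>S. S \<subseteq> P \<and> card S = 4 \<and> (\<forall>l\<in>L. card {x\<in>S. I x l} \<le> 2))) \<and>
     (\<forall>l\<in>L. card {x\<in>P. I x l} = q + 1)"
    using assms(1) unfolding projective_plane_of_order_def projective_plane_def .
  note pp = H[THEN conjunct1, THEN conjunct1]
    H[THEN conjunct1, THEN conjunct2, THEN conjunct1]
    H[THEN conjunct1, THEN conjunct2, THEN conjunct2, THEN conjunct1]
    H[THEN conjunct1, THEN conjunct2, THEN conjunct2, THEN conjunct2, THEN conjunct1]
    H[THEN conjunct1, THEN conjunct2, THEN conjunct2, THEN conjunct2, THEN conjunct2]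
    H[THEN conjunct2]
  interpret ppo P L I q
  proof
    show "finite P" "finite L" by (fact pp(1), fact pp(2))
    show "\<And>x y. x\<in>P \<Longrightarrow> y\<in>P \<Longrightarrow> x \<noteq> y \<Longrightarrow> \<exists>!l. l \<in> L \<and> I x l \<and> I y l"
      using pp(3) by simp
    show "\<And>l m. l\<in>L \<Longrightarrow> m\<in>L \<Longrightarrow> l \<noteq> m \<Longrightarrow> \<exists>!x. x \<in> P \<and> I x l \<and> I x m"
      using pp(4) by simp
    show "\<exists>S. S \<subseteq> P \<and> card S = 4 \<and> (\<forall>l\<in>L. card {x\<in>S. I x l} \<le> 2)" by (fact pp(5))
    show "\<And>l. l\<in>L \<Longrightarrow> card {x\<in>P. I x l} = q + 1" using pp(6) by (rule bspec)
  qed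
  have d: "PD \<subseteq> P" "LD \<subseteq> L" "\<forall>x\<in>P - PD. \<exists>l\<in>LD. I x l" "\<forall>l\<in>L - LD. \<exists>x\<in>PD. I x l"
    using assms(2) unfolding incidence_dominating_def by auto
  have b1: "card PD + card LD + (q - 1) * card PD \<ge> q*q + q" using bound1 d by blast
  have b2: "card PD + card LD + (q - 1) * card LD \<ge> q*q + q" using bound2 d by blast
  define k where "k = card PD"
  define m where "m = card LD"
  have B1: "int k + int m + (int q - 1) * int k \<ge> int q * int q + int q"
  proof (cases "q = 0")
    case True thus ?thesis using b1 by (simp add: k_def m_def)
  next
    case False
    hence h: "int (q - 1) = int q - 1" by simp
    have "int (q*q+q) \<le> int (k + m + (q - 1) * k)" using b1 unfolding k_def m_def by (simp only: of_nat_le_iff)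
    thus ?thesis unfolding of_nat_add of_nat_mult h .
  qed
  have B2: "int k + int m + (int q - 1) * int m \<ge> int q * int q + int q"
  proof (cases "q = 0")
    case True thus ?thesis using b2 by (simp add: k_def m_def)
  next
    case False
    hence h: "int (q - 1) = int q - 1" by simp
    have "int (q*q+q) \<le> int (k + m + (q - 1) * m)" using b2 unfolding k_def m_def by (simp only: of_nat_le_iff)
    thus ?thesis unfolding of_nat_add of_nat_mult h .
  qed
  have C: "int k + int m < 3 * int q - 1 \<longrightarrow> q \<le> k \<and> q \<le> m"
  proof
    assume h: "int k + int m < 3 * int q - 1"
    have q2: "q \<ge> 2"
    proof (rule ccontr)
      assume "\<not> q \<ge> 2"
      hence "q = 0 \<or> q = 1" by auto
      thus False using h B1 by auto
    qed
    have "(int q - 1) * int k > (int q - 1) * (int q - 1)" using B1 h by (simp add: algebra_simps)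
    hence "int k > int q - 1" using q2 mult_less_cancel_left_pos[of "int q - 1"] by simp
    moreover have "(int q - 1) * int m > (int q - 1) * (int q - 1)" using B2 h by (simp add: algebra_simps)
    hence "int m > int q - 1" using q2 mult_less_cancel_left_pos[of "int q - 1"] by simp
    ultimately show "q \<le> k \<and> q \<le> m" by linarith
  qed
  have e: "int (card PD + card LD) = int k + int m" by (simp add: k_def m_def)
  have e2: "int q ^ 2 = int q * int q" by (rule power2_eq_square)
  have G1: "int k + int m \<ge> int q * int q + int q - (int q - 1) * int k" using B1 by linarith
  have G2: "int k + int m \<ge> int q * int q + int q - (int q - 1) * int m" using B2 by linarith
  have F: "int k + int m \<ge> int q ^ 2 + int q - (int q - 1) * int k \<and>
         int k + int m \<ge> int q ^ 2 + int q - (int q - 1) * int m \<and>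
         (int k + int m < 3 * int q - 1 \<longrightarrow> k \<ge> q \<and> m \<ge> q)"
    unfolding e2 using G1 G2 C by (intro conjI)
  show ?thesis using F unfolding k_def m_def of_nat_add .
qed

end
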